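(* Let $\mathcal{G}$ be an undirected connected weighted graph on $\{1,\dots,n\}$ with Laplacian $L$, let $A_i\in\mathbb{R}^{p\times d_i}$ for $i=1,\dots,n$ be such that $A=[A_1,\dots,A_n]$ has full row rank, and let $\mathbf{A}=\mathrm{diag}(A_1,\dots,A_n)$ and $\mathbf{L}=L\otimes I_p$. Then for every constant $c>0$, $\mathbf{A}\mathbf{A}^\top+c\mathbf{L}\succ0$.
   Context: The graph has symmetric adjacency matrix $[a_{ij}]$ with $a_{ij}\ge0$ ($a_{ij}>0$ iff $i$ and $j$ are neighbors), and Laplacian $L=\mathrm{diag}(\sum_j a_{ij})_i-[a_{ij}]$; connected means there is a path between any two vertices. $\mathbf{A}=\mathrm{diag}(A_1,\dots,A_n)$ is the block-diagonal matrix in $\mathbb{R}^{np\times\sum_i d_i}$. *)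

theory Defs
  imports "Jordan_Normal_Form.Matrix" "Jordan_Normal_Form.DL_Rank"
begin

text \<open>Vertices are 0..n-1 (the paper's 1..n). Weighted adjacency matrix W (n x n).\<close>

definition graph_laplacian :: "real mat \<Rightarrow> real mat" where
  "graph_laplacian W = mat (dim_row W) (dim_row W)
     (\<lambda>(i,j). (if i = j then (\<Sum>k<dim_row W. W $$ (i,k)) else 0) - W $$ (i,j))"

definition graph_connected :: "real mat \<Rightarrow> bool" where
  "graph_connected W \<longleftrightarrow>
     (\<forall>i<dim_row W. \<forall>j<dim_row W.
        (\<lambda>x y. x < dim_row W \<and> y < dim_row W \<and> W $$ (x,y) > 0)\<^sup>*\<^sup>* i j)"

definition kron :: "'a::times mat \<Rightarrow> 'a mat \<Rightarrow> 'a mat" where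
  "kron A B = mat (dim_row A * dim_row B) (dim_col A * dim_col B)
     (\<lambda>(i,j). A $$ (i div dim_row B, j div dim_col B) * B $$ (i mod dim_row B, j mod dim_col B))"

definition offs :: "(nat \<Rightarrow> nat) \<Rightarrow> nat \<Rightarrow> nat" where
  "offs d k = (\<Sum>i<k. d i)"

definition hcat_blocks :: "nat \<Rightarrow> nat \<Rightarrow> (nat \<Rightarrow> nat) \<Rightarrow> (nat \<Rightarrow> real mat) \<Rightarrow> real mat" where
  "hcat_blocks n p d Ab = mat p (offs d n)
     (\<lambda>(r,s). \<Sum>k<n. if offs d k \<le> s \<and> s < offs d (Suc k) then Ab k $$ (r, s - offs d k) else 0)"

definition blkdiag :: "nat \<Rightarrow> nat \<Rightarrow> (nat \<Rightarrow> nat) \<Rightarrow> (nat \<Rightarrow> real mat) \<Rightarrow> real mat" where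
  "blkdiag n p d Ab = mat (n * p) (offs d n)
     (\<lambda>(r,s). \<Sum>k<n. if r div p = k \<and> offs d k \<le> s \<and> s < offs d (Suc k)
                       then Ab k $$ (r mod p, s - offs d k) else 0)"

definition pos_def :: "real mat \<Rightarrow> bool" where
  "pos_def M \<longleftrightarrow> M \<in> carrier_mat (dim_row M) (dim_row M) \<and> transpose_mat M = M \<and>
     (\<forall>x \<in> carrier_vec (dim_row M). x \<noteq> 0\<^sub>v (dim_row M) \<longrightarrow> x \<bullet> (M *\<^sub>v x) > 0)"

end

theory Submission imports Defs "Jordan_Normal_Form.DL_Rank" begin

lemma qf:
  fixes M :: "real mat"
  assumes "M \<in> carrier_mat N N" "x \<in> carrier_vec N"
  shows "x \<bullet> (M *\<^sub>v x) = (\<Sum>r<N. \<Sum>s<N. x$r * M$$(r,s) * x$s)"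
  using assms unfolding scalar_prod_def
  by (auto simp: row_def scalar_prod_def sum_distrib_left atLeast0LessThan mult.assoc intro!: sum.cong)

lemma sum_split_add: fixes m k :: nat shows "(\<Sum>r<m+k. f r) = (\<Sum>r<m. f r) + (\<Sum>a<k. f (m + a))"
  by (induction k) (auto simp: add.assoc)

lemma sum_split_mult: fixes n p :: nat shows "(\<Sum>r<n*p. f r) = (\<Sum>i<n. \<Sum>a<p. f (i*p + a))"
proof (induction n)
  case (Suc n)
  have "(\<Sum>r<Suc n*p. f r) = (\<Sum>r<n*p + p. f r)" by (simp add: add.commute)
  also have "\<dots> = (\<Sum>r<n*p. f r) + (\<Sum>a<p. f (n*p + a))" by (rule sum_split_add)
  finally show ?case using Suc by simp
qed simp

lemma laplace_form:
  fixes W :: "real mat" and z :: "nat \<Rightarrow> real"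
  assumes "W \<in> carrier_mat n n" "transpose_mat W = W"
  shows "(\<Sum>i<n. \<Sum>j<n. z i * graph_laplacian W $$ (i,j) * z j)
       = (\<Sum>i<n. \<Sum>j<n. W $$ (i,j) * (z i - z j)^2) / 2"
proof -
  have sym: "W $$ (i,j) = W $$ (j,i)" if "i<n" "j<n" for i j
    using assms that by (metis carrier_matD index_transpose_mat(1))
  have L: "graph_laplacian W $$ (i,j) = (if i = j then (\<Sum>k<n. W $$ (i,k)) else 0) - W $$ (i,j)"
    if "i<n" "j<n" for i j using assms that unfolding graph_laplacian_def by auto
  have "(\<Sum>i<n. \<Sum>j<n. z i * graph_laplacian W $$ (i,j) * z j)
      = (\<Sum>i<n. \<Sum>j<n. (if i = j then z i * (\<Sum>k<n. W $$ (i,k)) * z j else 0) - z i * W $$ (i,j) * z j)"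
    by (intro sum.cong refl, simp add: L algebra_simps)
  also have "\<dots> = (\<Sum>i<n. \<Sum>k<n. W $$ (i,k) * z i ^2) - (\<Sum>i<n. \<Sum>j<n. W$$(i,j) * z i * z j)"
    by (simp add: sum_subtractf sum_distrib_left sum_distrib_right power2_eq_square algebra_simps)
  finally have e1: "(\<Sum>i<n. \<Sum>j<n. z i * graph_laplacian W $$ (i,j) * z j) =
     (\<Sum>i<n. \<Sum>k<n. W $$ (i,k) * z i ^2) - (\<Sum>i<n. \<Sum>j<n. W$$(i,j) * z i * z j)" .
  have sw: "(\<Sum>i<n. \<Sum>j<n. W $$ (i,j) * z j ^2) = (\<Sum>i<n. \<Sum>j<n. W $$ (i,j) * z i ^2)"
    apply (subst sum.swap) apply (intro sum.cong refl) using sym by auto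
  have "(\<Sum>i<n. \<Sum>j<n. W $$ (i,j) * (z i - z j)^2) =
     (\<Sum>i<n. \<Sum>j<n. W $$ (i,j) * z i ^2) + (\<Sum>i<n. \<Sum>j<n. W $$ (i,j) * z j ^2)
      - 2 * (\<Sum>i<n. \<Sum>j<n. W$$(i,j) * z i * z j)"
    by (simp add: power2_diff sum_subtractf sum.distrib sum_distrib_left algebra_simps)
  then show ?thesis using e1 sw by simp
qed

lemma idx_bound:
  fixes i a n p :: nat
  assumes "i < n" "a < p" shows "i*p+a < n*p"
proof -
  have "i*p+a < i*p+p" using assms by simp
  also have "\<dots> = Suc i * p" by simp
  also have "\<dots> \<le> n*p" using assms by (intro mult_le_mono1) simp
  finally show ?thesis .
qed

lemma offs_mono: "i \<le> j \<Longrightarrow> offs d i \<le> offs d j"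
  unfolding offs_def by (rule sum_mono2) auto

lemma block_exists: "s < offs d n \<Longrightarrow> \<exists>k<n. offs d k \<le> s \<and> s < offs d (Suc k)"
proof (induction n)
  case 0 then show ?case by (simp add: offs_def)
next
  case (Suc n)
  show ?case
  proof (cases "s < offs d n")
    case True then show ?thesis using Suc by (meson less_SucI)
  next
    case False then show ?thesis using Suc.prems by (intro exI[of _ n]) auto
  qed
qed

lemma block_unique:
  assumes "offs d k \<le> s" "s < offs d (Suc k)"
  shows "(offs d k' \<le> s \<and> s < offs d (Suc k')) \<longleftrightarrow> k' = k"
proof
  assume h: "offs d k' \<le> s \<and> s < offs d (Suc k')"
  show "k' = k"
  proof (rule ccontr)
    assume "k' \<noteq> k"
    then consider "Suc k' \<le> k" | "Suc k \<le> k'" by linarith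
    then show False
    proof cases
      case 1 then show False using offs_mono[OF 1, of d] h assms by linarith
    next
      case 2 then show False using offs_mono[OF 2, of d] h assms by linarith
    qed
  qed
qed (use assms in auto)

lemma sum_block:
  assumes "k < n" "offs d k \<le> s" "s < offs d (Suc k)"
  shows "(\<Sum>k'<n. if P k' \<and> offs d k' \<le> s \<and> s < offs d (Suc k') then f k' else 0)
       = (if P k then f k else (0::real))"
proof -
  have "(\<Sum>k'<n. if P k' \<and> offs d k' \<le> s \<and> s < offs d (Suc k') then f k' else 0)
      = (\<Sum>k'<n. if k' = k then (if P k then f k else 0) else 0)"
    by (intro sum.cong refl) (use block_unique[OF assms(2,3)] in auto)
  also have "\<dots> = (if P k then f k else 0)" using assms(1) by simp
  finally show ?thesis .
qed

lemma conn_const: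
  assumes W: "W \<in> carrier_mat n n" and conn: "graph_connected W"
    and f: "\<forall>i<n. \<forall>j<n. W $$ (i,j) > 0 \<longrightarrow> f i = f j" and n: "0 < n" and j: "j < n"
  shows "f j = f 0"
proof -
  let ?R = "\<lambda>x y. x < dim_row W \<and> y < dim_row W \<and> W $$ (x,y) > 0"
  have "?R\<^sup>*\<^sup>* 0 j" using conn W n j unfolding graph_connected_def by auto
  then show ?thesis
  proof (induction rule: rtranclp_induct)
    case (step y z) then show ?case using f W by auto
  qed simp
qed

lemma (in vec_space) full_rank_span:
  assumes A: "A \<in> carrier_mat n nc" and r: "rank A = n"
  shows "span (set (cols A)) = carrier_vec n"
proof -
  let ?S = "set (cols A)"
  have S: "?S \<subseteq> carrier_vec n" using cols_dim A by (metis carrier_matD(1) module_vec_simps(3))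
  have vs: "vectorspace class_ring (span_vs ?S)"
    using field.field_axioms vectorspace_def submodule_is_module[OF span_is_submodule[OF S]] by metis
  obtain b where fb: "finite b" and bb: "vectorspace.basis class_ring (span_vs ?S) b"
    using vectorspace.finite_basis_exists[OF vs fin_dim_span_cols[OF A]] by blast
  have cb: "card b = n" using vectorspace.dim_basis[OF vs fb bb] r unfolding rank_def by simp
  have bS: "b \<subseteq> span ?S" using bb vectorspace.basis_def[OF vs] by auto
  have li: "LinearCombinations.module.lin_indpt class_ring (vs (span ?S)) b"
    using bb vectorspace.basis_def[OF vs] by auto
  have li2: "lin_indpt b"
    using li span_li_not_depend(2)[OF bS span_is_submodule[OF S]] by simp
  have bc: "b \<subseteq> carrier_vec n" using bS span_closed[OF S] by auto
  have "basis b" by (rule dim_li_is_basis[OF fin_dim fb bc li2], simp add: cb dim_is_n)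
  hence "span b = carrier V" unfolding basis_def by auto
  moreover have "span b \<subseteq> span ?S" using span_is_subset[OF bS span_is_submodule[OF S]] .
  moreover have "span ?S \<subseteq> carrier V" using span_closed[OF S] by auto
  ultimately show ?thesis by auto
qed

lemma self_scalar_zero:
  fixes y :: "real vec"
  assumes "y \<in> carrier_vec p" "y \<bullet> y = 0" shows "y = 0\<^sub>v p"
proof -
  have "(\<Sum>i\<in>{0..<p}. y$i * y$i) = 0" using assms unfolding scalar_prod_def by simp
  then have "\<forall>i\<in>{0..<p}. y$i * y$i = 0"
    by (subst sum_nonneg_eq_0_iff[symmetric]) auto
  then show ?thesis using assms by (intro eq_vecI) auto
qed

lemma rank_orth:
  fixes H :: "real mat"
  assumes H: "H \<in> carrier_mat p D" and r: "vec_space.rank p H = p"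
    and y: "y \<in> carrier_vec p" and o: "\<forall>s<D. y \<bullet> col H s = 0"
  shows "y = 0\<^sub>v p"
proof -
  interpret vec_space "TYPE(real)" p .
  have sp: "span (set (cols H)) = carrier_vec p" using full_rank_span[OF H r] .
  have S: "set (cols H) \<subseteq> carrier_vec p" using H by (auto simp: cols_def)
  have "y \<in> orthogonal_complement (set (cols H))"
    using y o H unfolding orthogonal_complement_def by (auto simp: cols_def)
  then have "y \<in> orthogonal_complement (span (set (cols H)))"
    using in_orthogonal_complement_span[OF S] by simp
  then have "y \<bullet> y = 0" using sp y unfolding orthogonal_complement_def by auto
  then show ?thesis using self_scalar_zero y by blast
qed

theorem lemma6:
  fixes n p :: nat and d :: "nat \<Rightarrow> nat" and W :: "real mat"
    and Ab :: "nat \<Rightarrow> real mat" and c :: real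
  assumes W_carrier: "W \<in> carrier_mat n n"
    and W_sym: "transpose_mat W = W"
    and W_nonneg: "\<forall>i<n. \<forall>j<n. W $$ (i,j) \<ge> 0"
    and conn: "graph_connected W"
    and A_carrier: "\<forall>i<n. Ab i \<in> carrier_mat p (d i)"
    and full_row_rank: "vec_space.rank p (hcat_blocks n p d Ab) = p"
    and c_pos: "c > 0"
  shows "pos_def (blkdiag n p d Ab * transpose_mat (blkdiag n p d Ab)
                  + c \<cdot>\<^sub>m kron (graph_laplacian W) (1\<^sub>m p))"
proof -
  define N where "N = n * p"
  define D where "D = offs d n"
  define B where "B = blkdiag n p d Ab"
  define H where "H = hcat_blocks n p d Ab"
  define L where "L = graph_laplacian W"
  define K where "K = kron L (1\<^sub>m p)"
  define M where "M = B * transpose_mat B + c \<cdot>\<^sub>m K"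
  have dW: "dim_row W = n" using W_carrier by auto
  have B: "B \<in> carrier_mat N D" unfolding B_def N_def D_def blkdiag_def by auto
  have H: "H \<in> carrier_mat p D" unfolding H_def D_def hcat_blocks_def by auto
  have Lc: "L \<in> carrier_mat n n" unfolding L_def graph_laplacian_def using dW by auto
  have Lij: "L $$ (i,j) = (if i = j then (\<Sum>k<n. W $$ (i,k)) else 0) - W $$ (i,j)"
    if "i<n" "j<n" for i j using that dW unfolding L_def graph_laplacian_def by auto
  have Wsym: "W $$ (i,j) = W $$ (j,i)" if "i<n" "j<n" for i j
    using W_carrier W_sym that by (metis carrier_matD index_transpose_mat(1))
  have Lsym: "L $$ (i,j) = L $$ (j,i)" if "i<n" "j<n" for i j
    using that by (simp add: Lij Wsym)
  have K: "K \<in> carrier_mat N N" using Lc unfolding K_def kron_def N_def by auto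
  have Kij: "K $$ (r,s) = L $$ (r div p, s div p) * (if r mod p = s mod p then 1 else 0)"
    if "r < N" "s < N" for r s
  proof -
    have p: "0 < p" using that N_def by (cases p) auto
    show ?thesis using that Lc p unfolding K_def kron_def N_def by auto
  qed
  have BBt: "B * transpose_mat B \<in> carrier_mat N N" using B by auto
  have M: "M \<in> carrier_mat N N" unfolding M_def using BBt K by auto
  have Mij: "M $$ (r,s) = (B * transpose_mat B) $$ (r,s) + c * K $$ (r,s)" if "r<N" "s<N" for r s
    unfolding M_def using that BBt K by auto
  have Ksym: "K $$ (r,s) = K $$ (s,r)" if "r<N" "s<N" for r s
  proof -
    have "r div p < n" "s div p < n" using that N_def
      by (metis less_mult_imp_div_less mult.commute)+
    then show ?thesis using that Kij Lsym by auto
  qed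
  have BBsym: "(B * transpose_mat B) $$ (r,s) = (B * transpose_mat B) $$ (s,r)" if "r<N" "s<N" for r s
    using that B by (auto intro: comm_scalar_prod[of _ D])
  have Msym: "transpose_mat M = M"
    using M by (intro eq_matI) (auto simp: Mij Ksym BBsym)
  have posx: "x \<bullet> (M *\<^sub>v x) > 0" if x: "x \<in> carrier_vec N" and xnz: "x \<noteq> 0\<^sub>v N" for x
  proof -
    have p: "0 < p" and n: "0 < n"
    proof -
      have "N \<noteq> 0"
      proof
        assume "N = 0"
        then have "x = 0\<^sub>v N" using x by (intro eq_vecI) auto
        then show False using xnz by simp
      qed
      then show "0 < p" "0 < n" unfolding N_def by auto
    qed
    define u where "u = transpose_mat B *\<^sub>v x"
    have u: "u \<in> carrier_vec D" unfolding u_def using mult_mat_vec_carrier[OF transpose_carrier_mat[THEN iffD2, OF B] x] .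
    define Q where "Q = (\<Sum>r<N. \<Sum>s<N. x$r * K$$(r,s) * x$s)"
    define z where "z = (\<lambda>a i. x $ (i*p + a))"
    have E1: "x \<bullet> (M *\<^sub>v x) = u \<bullet> u + c * Q"
    proof -
      have "x \<bullet> (M *\<^sub>v x) = (\<Sum>r<N. \<Sum>s<N. x$r * M$$(r,s) * x$s)" by (rule qf[OF M x])
      also have "\<dots> = (\<Sum>r<N. \<Sum>s<N. x$r * (B * transpose_mat B)$$(r,s) * x$s) + c * Q"
        unfolding Q_def by (simp add: Mij sum.distrib sum_distrib_left algebra_simps)
      also have "(\<Sum>r<N. \<Sum>s<N. x$r * (B * transpose_mat B)$$(r,s) * x$s) = x \<bullet> ((B * transpose_mat B) *\<^sub>v x)"
        by (rule qf[OF BBt x, symmetric])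
      also have "\<dots> = x \<bullet> (B *\<^sub>v u)" unfolding u_def using B x by auto
      also have "\<dots> = u \<bullet> u" by (metis transpose_vec_mult_scalar[OF B u x] u_def)
      finally show ?thesis .
    qed
    have E2: "Q = (\<Sum>a<p. (\<Sum>i<n. \<Sum>j<n. W $$ (i,j) * (z a i - z a j)^2) / 2)"
    proof -
      have Kb: "K $$ (i*p+a, j*p+b) = L $$ (i,j) * (if a = b then 1 else 0)"
        if "i<n" "j<n" "a<p" "b<p" for i j a b
      proof -
        have "i*p+a < N" "j*p+b < N" unfolding N_def using that
          by (auto intro: idx_bound)
        then show ?thesis using Kij that by simp
      qed
      have "Q = (\<Sum>i<n. \<Sum>a<p. \<Sum>j<n. \<Sum>b<p. x$(i*p+a) * K$$(i*p+a,j*p+b) * x$(j*p+b))"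
        unfolding Q_def N_def by (simp add: sum_split_mult)
      also have "\<dots> = (\<Sum>i<n. \<Sum>a<p. \<Sum>j<n. z a i * L$$(i,j) * z a j)"
      proof (intro sum.cong refl)
        fix i a j assume "i \<in> {..<n}" "a \<in> {..<p}" "j \<in> {..<n}"
        show "(\<Sum>b<p. x$(i*p+a) * K$$(i*p+a,j*p+b) * x$(j*p+b)) = z a i * L$$(i,j) * z a j"
        proof -
          have "(\<Sum>b<p. x$(i*p+a) * K$$(i*p+a,j*p+b) * x$(j*p+b))
              = (\<Sum>b<p. if b = a then x$(i*p+a) * L$$(i,j) * x$(j*p+a) else 0)"
            by (intro sum.cong refl) (use \<open>i \<in> {..<n}\<close> \<open>a \<in> {..<p}\<close> \<open>j \<in> {..<n}\<close> in \<open>auto simp: Kb\<close>)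
          also have "\<dots> = x$(i*p+a) * L$$(i,j) * x$(j*p+a)" using \<open>a \<in> {..<p}\<close> by simp
          finally show ?thesis unfolding z_def .
        qed
      qed
      also have "\<dots> = (\<Sum>a<p. \<Sum>i<n. \<Sum>j<n. z a i * L$$(i,j) * z a j)"
        by (rule sum.swap)
      also have "\<dots> = (\<Sum>a<p. (\<Sum>i<n. \<Sum>j<n. W $$ (i,j) * (z a i - z a j)^2) / 2)"
        unfolding L_def by (intro sum.cong refl laplace_form[OF W_carrier W_sym])
      finally show ?thesis .
    qed
    have Tnn: "(\<Sum>i<n. \<Sum>j<n. W $$ (i,j) * (z a i - z a j)^2) \<ge> 0" for a
      using W_nonneg by (intro sum_nonneg) auto
    have Qnn: "Q \<ge> 0" unfolding E2 using Tnn by (intro sum_nonneg) auto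
    have uu: "u \<bullet> u = (\<Sum>s\<in>{0..<D}. (u$s)^2)" using u unfolding scalar_prod_def
      by (simp add: power2_eq_square)
    have uunn: "u \<bullet> u \<ge> 0" unfolding uu by (intro sum_nonneg) auto
    show ?thesis
    proof (rule ccontr)
      assume "\<not> ?thesis"
      then have le: "u \<bullet> u + c * Q \<le> 0" using E1 by simp
      have uu0: "u \<bullet> u = 0" using le uunn Qnn c_pos
        by (smt (verit) mult_nonneg_nonneg)
      have Q0: "Q = 0" using le uunn Qnn c_pos
        by (smt (verit) mult_pos_pos)
      have us: "u $ s = 0" if "s < D" for s
      proof -
        have "\<forall>s\<in>{0..<D}. (u$s)^2 = 0" using uu0 unfolding uu
          by (subst sum_nonneg_eq_0_iff[symmetric]) auto
        then show ?thesis using that by auto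
      qed
      have T0: "(\<Sum>i<n. \<Sum>j<n. W $$ (i,j) * (z a i - z a j)^2) = 0" if "a < p" for a
      proof -
        have "\<forall>a\<in>{..<p}. (\<Sum>i<n. \<Sum>j<n. W $$ (i,j) * (z a i - z a j)^2) / 2 = 0"
          using Q0 unfolding E2 by (subst sum_nonneg_eq_0_iff[symmetric]) (auto intro: Tnn)
        then show ?thesis using that by auto
      qed
      have zeq: "z a i = z a j" if "a<p" "i<n" "j<n" "W $$ (i,j) > 0" for a i j
      proof -
        have "\<forall>i\<in>{..<n}. (\<Sum>j<n. W $$ (i,j) * (z a i - z a j)^2) = 0"
          using T0[OF that(1)] W_nonneg by (subst sum_nonneg_eq_0_iff[symmetric]) (auto intro!: sum_nonneg)
        then have "(\<Sum>j<n. W $$ (i,j) * (z a i - z a j)^2) = 0" using that by auto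
        then have "\<forall>j\<in>{..<n}. W $$ (i,j) * (z a i - z a j)^2 = 0"
          using W_nonneg that by (subst sum_nonneg_eq_0_iff[symmetric]) auto
        then have "W $$ (i,j) * (z a i - z a j)^2 = 0" using that(3) by blast
        then show ?thesis using that by auto
      qed
      have zc: "z a j = z a 0" if "a<p" "j<n" for a j
        using conn_const[OF W_carrier conn _ n that(2), of "z a"] zeq[OF that(1)] by blast
      define y where "y = vec p (\<lambda>a. z a 0)"
      have y: "y \<in> carrier_vec p" unfolding y_def by simp
      have orth: "\<forall>s<D. y \<bullet> col H s = 0"
      proof (intro allI impI)
        fix s assume s: "s < D"
        obtain k where k: "k < n" "offs d k \<le> s" "s < offs d (Suc k)"
          using block_exists s unfolding D_def by blast
        have Brs: "B $$ (i*p+a, s) = (if i = k then Ab k $$ (a, s - offs d k) else 0)"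
          if "i<n" "a<p" for i a
        proof -
          have "i*p+a < n*p" using that
            by (auto intro: idx_bound)
          then have "B $$ (i*p+a, s) = (\<Sum>k'<n. if (i*p+a) div p = k' \<and> offs d k' \<le> s \<and> s < offs d (Suc k')
                       then Ab k' $$ ((i*p+a) mod p, s - offs d k') else 0)"
            using s unfolding B_def blkdiag_def D_def by auto
          also have "\<dots> = (if (i*p+a) div p = k then Ab k $$ ((i*p+a) mod p, s - offs d k) else 0)"
            by (rule sum_block[OF k])
          finally show ?thesis using that by simp
        qed
        have Has: "H $$ (a, s) = Ab k $$ (a, s - offs d k)" if "a<p" for a
        proof -
          have "H $$ (a, s) = (\<Sum>k'<n. if True \<and> offs d k' \<le> s \<and> s < offs d (Suc k')
                       then Ab k' $$ (a, s - offs d k') else 0)"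
            using s that unfolding H_def hcat_blocks_def D_def by auto
          also have "\<dots> = Ab k $$ (a, s - offs d k)" by (subst sum_block[OF k]) simp
          finally show ?thesis .
        qed
        have "u $ s = col B s \<bullet> x" unfolding u_def using B s by auto
        also have "\<dots> = (\<Sum>r<N. B $$ (r,s) * x $ r)"
          using B s x unfolding scalar_prod_def by (auto simp: atLeast0LessThan intro!: sum.cong)
        also have "\<dots> = (\<Sum>i<n. \<Sum>a<p. B $$ (i*p+a,s) * x $ (i*p+a))"
          unfolding N_def by (rule sum_split_mult)
        also have "\<dots> = (\<Sum>i<n. \<Sum>a<p. if i = k then Ab k $$ (a, s - offs d k) * z a k else 0)"
          by (intro sum.cong refl) (simp add: Brs z_def)
        also have "\<dots> = (\<Sum>a<p. Ab k $$ (a, s - offs d k) * z a k)"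
        proof -
          have "(\<Sum>i<n. \<Sum>a<p. if i = k then Ab k $$ (a, s - offs d k) * z a k else 0)
             = (\<Sum>i<n. if i = k then (\<Sum>a<p. Ab k $$ (a, s - offs d k) * z a k) else 0)"
            by (intro sum.cong refl) auto
          then show ?thesis using k(1) by simp
        qed
        also have "\<dots> = (\<Sum>a<p. y $ a * H $$ (a, s))"
          by (intro sum.cong refl) (simp add: y_def Has zc k(1) mult.commute)
        also have "\<dots> = y \<bullet> col H s"
          using H s y unfolding scalar_prod_def by (auto simp: atLeast0LessThan intro!: sum.cong)
        finally show "y \<bullet> col H s = 0" using us[OF s] by simp
      qed
      have y0: "y = 0\<^sub>v p" using rank_orth[OF H full_row_rank[folded H_def] y orth] .
      have "x = 0\<^sub>v N"
      proof (intro eq_vecI)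
        fix r assume "r < dim_vec (0\<^sub>v N)"
        then have r: "r < N" by simp
        have a: "r mod p < p" and i: "r div p < n" using r p N_def
          by (auto simp: less_mult_imp_div_less mult.commute)
        have "x $ r = z (r mod p) (r div p)" unfolding z_def by simp
        also have "\<dots> = z (r mod p) 0" using zc a i by blast
        also have "\<dots> = y $ (r mod p)" unfolding y_def using a by simp
        finally show "x $ r = 0\<^sub>v N $ r" using y0 a r by simp
      qed (use x in auto)
      then show False using xnz by simp
    qed
  qed
  show ?thesis
    unfolding pos_def_def M_def[symmetric] B_def[symmetric] K_def[symmetric] L_def[symmetric]
    using M Msym posx by auto
qed

end
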